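(* Let $T\subset\mathbb{R}^3$ be a non-degenerate tetrahedron, let $\mathcal{Y}^0(T)=[\mathcal{N}_{I}^0(T)]^3\oplus[\widetilde{\mathit{P}}^1(T)\otimes\mathbb{1}]$ (a space of dimension $21$), and let $E=\mathit{U}^2(T)\setminus\mathit{P}^1(T)$ be the span of the six quadratic edge base functions. Then the sum $\mathcal{Y}^0(T)+\operatorname{dev}\mathrm{D}[E]^3$ is linearly dependent, i.e. $\dim\mathcal{Y}^0(T)+\dim\operatorname{dev}\mathrm{D}[E]^3>\dim\big(\mathcal{Y}^0(T)+\operatorname{dev}\mathrm{D}[E]^3\big)$.
   Context: $\mathit{P}^p(T)$ denotes polynomials of total degree at most $p$ on $T$, $\widetilde{\mathit{P}}^p(T)$ homogeneous polynomials of degree $p$, $\mathbb{1}$ the $3\times3$ identity matrix, and $\widetilde{\mathit{P}}^1(T)\otimes\mathbb{1}=\{q\mathbb{1}:q\in\widetilde{\mathit{P}}^1(T)\}$. The lowest order Nédélec space is $\mathcal{N}_{I}^0(T)=\operatorname{span}\{\mathbf{e}_1,\mathbf{e}_2,\mathbf{e}_3,(0,z,-y)^T,(-z,0,x)^T,(y,-x,0)^T\}$ and $[\mathcal{N}_{I}^0(T)]^3$ denotes the $3\times3$ matrix fields whose rows all lie in $\mathcal{N}_{I}^0(T)$. The quadratic $H^1$-conforming polytopal space $\mathit{U}^2(T)=\mathit{P}^2(T)$ is given by the four vertex functions (the barycentric coordinates $\lambda_1,\dots,\lambda_4$, spanning $\mathit{P}^1(T)$) and one quadratic edge function per edge (e.g.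 $\lambda_i\lambda_j$ for the edge between vertices $i<j$), each vanishing on all other edges; $E=\mathit{U}^2(T)\setminus\mathit{P}^1(T)$ is the span of these six edge functions, so $\mathit{P}^2(T)=\mathit{P}^1(T)\oplus E$. For a vector field $\mathbf{v}$, $\mathrm{D}\mathbf{v}=\mathbf{v}\otimes\nabla$ is its Jacobian matrix, $\operatorname{dev}\mathbf{P}=\mathbf{P}-\frac13(\operatorname{tr}\mathbf{P})\mathbb{1}$, and $\operatorname{dev}\mathrm{D}[E]^3=\{\operatorname{dev}\mathrm{D}\mathbf{v}:\mathbf{v}\in E^3\}$. *)

theory Defs
  imports "HOL-Analysis.Analysis" "HOL-Library.Function_Algebras"
begin

type_synonym pt = "real^3"
type_synonym mat3 = "real^3^3"
type_synonym mfield = "pt \<Rightarrow> mat3"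

definition fscale :: "real \<Rightarrow> ('a \<Rightarrow> 'b::real_vector) \<Rightarrow> ('a \<Rightarrow> 'b)" where
  "fscale c F = (\<lambda>x. c *\<^sub>R F x)"

definition fdim :: "mfield set \<Rightarrow> nat" where
  "fdim S = vector_space.dim fscale S"

definition fspan :: "('a \<Rightarrow> 'b::real_vector) set \<Rightarrow> ('a \<Rightarrow> 'b) set" where
  "fspan S = module.span fscale S"

definition onT :: "pt set \<Rightarrow> mfield \<Rightarrow> mfield" where
  "onT T F = (\<lambda>x. if x \<in> T then F x else 0)"

definition bary :: "(nat \<Rightarrow> pt) \<Rightarrow> nat \<Rightarrow> pt \<Rightarrow> real" where
  "bary a i x = (THE u. (\<forall>j. j \<ge> 4 \<longrightarrow> u j = 0) \<and> (\<Sum>j<4. u j) = 1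
                     \<and> (\<Sum>j<4. u j *\<^sub>R a j) = x) i"

definition N0 :: "(pt \<Rightarrow> pt) set" where
  "N0 = fspan {(\<lambda>p. vector [1, 0, 0]), (\<lambda>p. vector [0, 1, 0]), (\<lambda>p. vector [0, 0, 1]),
              (\<lambda>p. vector [0, p$3, - (p$2)]), (\<lambda>p. vector [- (p$3), 0, p$1]),
              (\<lambda>p. vector [p$2, - (p$1), 0])}"

definition P1hom :: "(pt \<Rightarrow> real) set" where
  "P1hom = {(\<lambda>x. c \<bullet> x) | c. True}"

definition Y0 :: "mfield set" where
  "Y0 = {(\<lambda>x. F x + q x *\<^sub>R mat 1) | F q. (\<forall>i. (\<lambda>x. F x $ i) \<in> N0) \<and> q \<in> P1hom}"

definition Eedge :: "(nat \<Rightarrow> pt) \<Rightarrow> (pt \<Rightarrow> real) set" where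
  "Eedge a = fspan {(\<lambda>x. bary a i x * bary a j x) | i j. i < j \<and> j < 4}"

text \<open>Jacobian D v = v \<otimes> \<nabla>: entry (i,j) is \<partial>v_i/\<partial>x_j.\<close>
definition Jac :: "(pt \<Rightarrow> pt) \<Rightarrow> mfield" where
  "Jac v = (\<lambda>x. \<chi> i j. frechet_derivative (\<lambda>y. v y $ i) (at x) (axis j 1))"

definition dev :: "mat3 \<Rightarrow> mat3" where
  "dev P = P - (trace P / 3) *\<^sub>R mat 1"

definition devDE :: "(nat \<Rightarrow> pt) \<Rightarrow> mfield set" where
  "devDE a = {(\<lambda>x. dev (Jac v x)) | v. \<forall>i. (\<lambda>x. v x $ i) \<in> Eedge a}"

end

theory Submission
  imports Defs
begin

lemma fscale_vs: "vector_space (fscale :: real \<Rightarrow> ('a \<Rightarrow> 'b::real_vector) \<Rightarrow> _)"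
  by unfold_locales (auto simp: fscale_def fun_eq_iff scaleR_add_right scaleR_add_left)

interpretation fv: vector_space "fscale :: real \<Rightarrow> ('a \<Rightarrow> 'b::real_vector) \<Rightarrow> _"
  by (rule fscale_vs)

lemma dim_sum_lt:
  fixes A B G :: "('a \<Rightarrow> 'b::real_vector) set"
  assumes "A \<subseteq> fv.span G" "B \<subseteq> fv.span G" "finite G" "z \<in> A" "z \<in> B" "z \<noteq> 0"
  shows "fv.dim {Y + W | Y W. Y \<in> A \<and> W \<in> B} < fv.dim A + fv.dim B"
proof -
  have iz: "fv.independent {z}" using assms(6) by simp
  obtain BA where BA: "{z} \<subseteq> BA" "BA \<subseteq> A" "fv.independent BA" "A \<subseteq> fv.span BA"
    using fv.maximal_independent_subset_extend[of "{z}" A] iz assms(4) by auto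
  obtain BB where BB: "{z} \<subseteq> BB" "BB \<subseteq> B" "fv.independent BB" "B \<subseteq> fv.span BB"
    using fv.maximal_independent_subset_extend[of "{z}" B] iz assms(5) by auto
  have fA: "finite BA" using fv.independent_span_bound[OF assms(3) BA(3)] BA(2) assms(1) by auto
  have fB: "finite BB" using fv.independent_span_bound[OF assms(3) BB(3)] BB(2) assms(2) by auto
  have dA: "fv.dim A = card BA" using fv.dim_unique[OF BA(2,4,3)] by simp
  have dB: "fv.dim B = card BB" using fv.dim_unique[OF BB(2,4,3)] by simp
  have sub: "{Y + W | Y W. Y \<in> A \<and> W \<in> B} \<subseteq> fv.span (BA \<union> BB)"
  proof
    fix x assume "x \<in> {Y + W | Y W. Y \<in> A \<and> W \<in> B}"
    then obtain Y W where x: "x = Y + W" "Y \<in> A" "W \<in> B" by auto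
    have "Y \<in> fv.span (BA \<union> BB)" using x(2) BA(4) fv.span_mono[of BA "BA \<union> BB"] by auto
    moreover have "W \<in> fv.span (BA \<union> BB)" using x(3) BB(4) fv.span_mono[of BB "BA \<union> BB"] by auto
    ultimately show "x \<in> fv.span (BA \<union> BB)" using x(1) fv.span_add by auto
  qed
  have "fv.dim {Y + W | Y W. Y \<in> A \<and> W \<in> B} \<le> card (BA \<union> BB)"
    using fv.dim_le_card[OF sub] fA fB by auto
  moreover have "card (BA \<union> BB) + card (BA \<inter> BB) = card BA + card BB"
    using card_Un_Int[OF fA fB] by simp
  moreover have "card (BA \<inter> BB) > 0" using BA(1) BB(1) fA by (auto simp: card_gt_0_iff)
  ultimately show ?thesis using dA dB by linarith
qed

definition bc :: "(nat \<Rightarrow> pt) \<Rightarrow> pt \<Rightarrow> (nat \<Rightarrow> real) \<Rightarrow> bool" where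
  "bc a x u \<longleftrightarrow> (\<forall>j. j \<ge> 4 \<longrightarrow> u j = 0) \<and> (\<Sum>j<4. u j) = 1 \<and> (\<Sum>j<4. u j *\<^sub>R a j) = x"

lemma bc_ex1:
  fixes a :: "nat \<Rightarrow> real^3"
  assumes inj: "inj_on a {..<4}" and ind: "\<not> affine_dependent (a ` {..<4})"
  shows "\<exists>!u. bc a x u"
proof -
  let ?S = "a ` {..<4}"
  have fS: "finite ?S" by simp
  have cS: "card ?S = 4" using card_image[OF inj] by simp
  have "of_nat (card ?S) = aff_dim ?S + 1" using aff_dim_affine_independent[OF ind] .
  hence "aff_dim ?S = int DIM(real^3)" using cS by simp
  hence "affine hull ?S = UNIV" using affine_hull_UNIV by blast
  hence "x \<in> affine hull ?S" by simp
  then obtain u where u: "sum u ?S = 1" "(\<Sum>v\<in>?S. u v *\<^sub>R v) = x"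
    using affine_hull_finite[OF fS] by auto
  define u' where "u' j = (if j < 4 then u (a j) else 0)" for j
  have e1: "(\<Sum>j<4. u' j) = 1"
    using u(1) sum.reindex[OF inj, of u] by (simp add: u'_def)
  have e2: "(\<Sum>j<4. u' j *\<^sub>R a j) = x"
    using u(2) sum.reindex[OF inj, of "\<lambda>v. u v *\<^sub>R v"] by (simp add: u'_def)
  have ex: "bc a x u'" unfolding bc_def using e1 e2 by (simp add: u'_def)
  have un: "w = u'" if w: "bc a x w" for w
  proof -
    define U where "U v = u' (inv_into {..<4} a v) - w (inv_into {..<4} a v)" for v
    have Ua: "U (a j) = u' j - w j" if "j < 4" for j
      using that inj by (simp add: U_def inv_into_f_f)
    have "sum U ?S = (\<Sum>j<4. U (a j))" using sum.reindex[OF inj, of U] by simp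
    also have "\<dots> = (\<Sum>j<4. u' j - w j)" using Ua by simp
    also have "\<dots> = 0" using e1 w by (simp add: bc_def sum_subtractf)
    finally have s0: "sum U ?S = 0" .
    have "(\<Sum>v\<in>?S. U v *\<^sub>R v) = (\<Sum>j<4. U (a j) *\<^sub>R a j)"
      using sum.reindex[OF inj, of "\<lambda>v. U v *\<^sub>R v"] by simp
    also have "\<dots> = (\<Sum>j<4. u' j *\<^sub>R a j - w j *\<^sub>R a j)" using Ua by (simp add: scaleR_diff_left)
    also have "\<dots> = 0" using e2 w by (simp add: bc_def sum_subtractf)
    finally have s1: "(\<Sum>v\<in>?S. U v *\<^sub>R v) = 0" .
    have "\<forall>v\<in>?S. U v = 0" using ind s0 s1 affine_dependent_explicit_finite[OF fS] by blast
    hence "u' j = w j" if "j < 4" for j using Ua that by force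
    moreover have "u' j = w j" if "\<not> j < 4" for j using w that by (simp add: u'_def bc_def)
    ultimately show ?thesis by (metis ext)
  qed
  show ?thesis using ex un by blast
qed

lemma bary_eq:
  assumes "inj_on a {..<4}" "\<not> affine_dependent (a ` {..<4})" "bc a x u"
  shows "bary a i x = u i"
proof -
  have "(THE u. bc a x u) = u" using bc_ex1[OF assms(1,2)] assms(3) by (simp add: the1_equality)
  thus ?thesis unfolding bary_def bc_def[symmetric] by simp
qed

lemma bary_bc:
  assumes "inj_on a {..<4}" "\<not> affine_dependent (a ` {..<4})"
  shows "bc a x (\<lambda>i. bary a i x)"
proof -
  obtain u where "bc a x u" using bc_ex1[OF assms] by blast
  thus ?thesis using bary_eq[OF assms] by (metis ext)
qed

definition affF :: "('a::real_vector \<Rightarrow> 'b::real_vector) \<Rightarrow> bool" where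
  "affF F \<longleftrightarrow> (\<exists>c f. linear f \<and> (\<forall>x. F x = c + f x))"

lemma affF_const: "affF (\<lambda>x. c)"
  unfolding affF_def by (rule exI[of _ c], rule exI[of _ "\<lambda>x. 0"]) (simp add: linear_zero)

lemma affF_lin: "linear f \<Longrightarrow> affF f"
  unfolding affF_def by (rule exI[of _ 0], rule exI[of _ f]) simp

lemma affF_add: "affF F \<Longrightarrow> affF G \<Longrightarrow> affF (\<lambda>x. F x + G x)"
proof -
  assume "affF F" "affF G"
  then obtain c f d g where h: "linear f" "\<And>x. F x = c + f x" "linear g" "\<And>x. G x = d + g x"
    unfolding affF_def by metis
  show ?thesis unfolding affF_def
    by (rule exI[of _ "c + d"], rule exI[of _ "\<lambda>x. f x + g x"]) (simp add: h linear_compose_add)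
qed

lemma affF_scale: "affF F \<Longrightarrow> affF (\<lambda>x. k *\<^sub>R F x)"
proof -
  assume "affF F"
  then obtain c f where h: "linear f" "\<And>x. F x = c + f x" unfolding affF_def by metis
  show ?thesis unfolding affF_def
    by (rule exI[of _ "k *\<^sub>R c"], rule exI[of _ "\<lambda>x. k *\<^sub>R f x"])
       (simp add: h linear_compose_scale_right scaleR_add_right)
qed

lemma affF_comp: "affF F \<Longrightarrow> linear g \<Longrightarrow> affF (\<lambda>x. g (F x))"
proof -
  assume "affF F" and g: "linear g"
  then obtain c f where h: "linear f" "\<And>x. F x = c + f x" unfolding affF_def by metis
  show ?thesis unfolding affF_def
    by (rule exI[of _ "g c"], rule exI[of _ "\<lambda>x. g (f x)"])
       (simp add: h g linear_compose[OF h(1) g, unfolded o_def] linear_add)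
qed

lemma affF_vec:
  fixes F :: "'a::real_vector \<Rightarrow> 'b::real_vector^'n"
  assumes "\<And>k. affF (\<lambda>x. F x $ k)"
  shows "affF F"
proof -
  have "\<forall>k. \<exists>c f. linear f \<and> (\<forall>x. F x $ k = c + f x)" using assms unfolding affF_def by blast
  then obtain c f where cf: "\<And>k. linear (f k)" "\<And>k x. F x $ k = c k + f k x" by metis
  have lin: "linear (\<lambda>x. \<chi> k. f k x)"
    by (rule linearI) (simp_all add: vec_eq_iff linear_add[OF cf(1)] linear_scale[OF cf(1)])
  show ?thesis unfolding affF_def
    by (rule exI[of _ "\<chi> k. c k"], rule exI[of _ "\<lambda>x. \<chi> k. f k x"]) (simp add: lin vec_eq_iff cf(2))
qed

lemma fun_sum_apply: "(sum F I) x = (\<Sum>i\<in>I. F i x)"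
  by (induction I rule: infinite_finite_induct) auto

definition GT :: "pt set \<Rightarrow> mfield set" where
  "GT T = (\<lambda>b. onT T (\<lambda>x. b)) ` Basis \<union> (\<lambda>(e,b). onT T (\<lambda>x. (x \<bullet> e) *\<^sub>R b)) ` (Basis \<times> Basis)"

lemma finite_GT: "finite (GT T)" unfolding GT_def by simp

lemma lin_expand:
  fixes f :: "'a::euclidean_space \<Rightarrow> 'b::euclidean_space"
  assumes "linear f"
  shows "f x = (\<Sum>e\<in>Basis. \<Sum>b\<in>Basis. (f e \<bullet> b) *\<^sub>R ((x \<bullet> e) *\<^sub>R b))"
proof -
  have "f x = f (\<Sum>e\<in>Basis. (x \<bullet> e) *\<^sub>R e)" by (simp add: euclidean_representation)
  also have "\<dots> = (\<Sum>e\<in>Basis. (x \<bullet> e) *\<^sub>R f e)" by (simp add: linear_sum[OF assms] linear_scale[OF assms])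
  also have "\<dots> = (\<Sum>e\<in>Basis. (x \<bullet> e) *\<^sub>R (\<Sum>b\<in>Basis. (f e \<bullet> b) *\<^sub>R b))"
    by (simp add: euclidean_representation)
  also have "\<dots> = (\<Sum>e\<in>Basis. \<Sum>b\<in>Basis. (f e \<bullet> b) *\<^sub>R ((x \<bullet> e) *\<^sub>R b))"
    by (simp add: scaleR_sum_right mult.commute)
  finally show ?thesis .
qed

lemma span_affF:
  fixes F :: "mfield"
  assumes "affF F"
  shows "onT T F \<in> fv.span (GT T)"
proof -
  obtain c f where h: "linear f" "\<And>x. F x = c + f x" using assms unfolding affF_def by metis
  let ?G0 = "\<lambda>b. onT T (\<lambda>x. b)"
  let ?G1 = "\<lambda>e b. onT T (\<lambda>x. (x \<bullet> e) *\<^sub>R b)"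
  have eq: "onT T F = (\<Sum>b\<in>Basis. fscale (c \<bullet> b) (?G0 b)) + (\<Sum>e\<in>Basis. \<Sum>b\<in>Basis. fscale (f e \<bullet> b) (?G1 e b))"
  proof (rule ext)
    fix x
    show "onT T F x = ((\<Sum>b\<in>Basis. fscale (c \<bullet> b) (?G0 b)) + (\<Sum>e\<in>Basis. \<Sum>b\<in>Basis. fscale (f e \<bullet> b) (?G1 e b))) x"
    proof (cases "x \<in> T")
      case True
      then show ?thesis
        by (simp add: onT_def fscale_def fun_sum_apply h(2) euclidean_representation lin_expand[OF h(1), of x])
    next
      case False
      then show ?thesis by (simp add: onT_def fscale_def fun_sum_apply)
    qed
  qed
  have "(\<Sum>b\<in>Basis. fscale (c \<bullet> b) (?G0 b)) \<in> fv.span (GT T)"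
    by (rule fv.span_sum, rule fv.span_scale, rule fv.span_base) (auto simp: GT_def)
  moreover have "(\<Sum>e\<in>Basis. \<Sum>b\<in>Basis. fscale (f e \<bullet> b) (?G1 e b)) \<in> fv.span (GT T)"
    by (rule fv.span_sum, rule fv.span_sum, rule fv.span_scale, rule fv.span_base) (auto simp: GT_def)
  ultimately show ?thesis unfolding eq by (rule fv.span_add)
qed

lemma affF_span:
  fixes S :: "('a::real_vector \<Rightarrow> 'b::real_vector) set"
  assumes "\<And>g. g \<in> S \<Longrightarrow> affF g" "f \<in> fv.span S"
  shows "affF f"
  using assms(2)
proof (induction rule: fv.span_induct)
  case base
  show ?case unfolding fv.subspace_def
  proof (intro conjI ballI allI)
    show "0 \<in> Collect affF" using affF_const[of 0] by (simp add: zero_fun_def)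
  next
    fix x y :: "'a \<Rightarrow> 'b" assume "x \<in> Collect affF" "y \<in> Collect affF"
    thus "x + y \<in> Collect affF" using affF_add[of x y] by (simp add: plus_fun_def)
  next
    fix c and x :: "'a \<Rightarrow> 'b" assume "x \<in> Collect affF"
    thus "fscale c x \<in> Collect affF" using affF_scale[of x c] by (simp add: fscale_def)
  qed
next
  case (step x)
  then show ?case using assms(1) by simp
qed

lemma lin3: "linear (\<lambda>p::real^3. vector [a1 * p$1 + a2 * p$2 + a3 * p$3, b1 * p$1 + b2 * p$2 + b3 * p$3, c1 * p$1 + c2 * p$2 + c3 * p$3] :: real^3)"
  by (rule linearI) (simp_all add: vec_eq_iff forall_3 algebra_simps)

lemma N0_affF: "f \<in> N0 \<Longrightarrow> affF f"
  unfolding N0_def fspan_def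
proof (rule affF_span)
  fix g assume "g \<in> ({(\<lambda>p. vector [1, 0, 0]), (\<lambda>p. vector [0, 1, 0]), (\<lambda>p. vector [0, 0, 1]),
              (\<lambda>p. vector [0, p$3, - (p$2)]), (\<lambda>p. vector [- (p$3), 0, p$1]),
              (\<lambda>p. vector [p$2, - (p$1), 0])} :: (pt \<Rightarrow> pt) set)"
  moreover have "affF (\<lambda>p::pt. vector [0, p$3, - (p$2)] :: pt)"
    using affF_lin[OF lin3[of 0 0 0 0 0 1 0 "-1" 0]] by simp
  moreover have "affF (\<lambda>p::pt. vector [- (p$3), 0, p$1] :: pt)"
    using affF_lin[OF lin3[of 0 0 "-1" 0 0 0 1 0 0]] by simp
  moreover have "affF (\<lambda>p::pt. vector [p$2, - (p$1), 0] :: pt)"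
    using affF_lin[OF lin3[of 0 1 0 "-1" 0 0 0 0 0]] by simp
  ultimately show "affF g" using affF_const by auto
qed

lemma Y0_affF: "Y \<in> Y0 \<Longrightarrow> affF Y"
proof -
  assume "Y \<in> Y0"
  then obtain F q where h: "Y = (\<lambda>x. F x + q x *\<^sub>R mat 1)" "\<forall>i. (\<lambda>x. F x $ i) \<in> N0" "q \<in> P1hom"
    unfolding Y0_def by blast
  obtain c where q: "q = (\<lambda>x. c \<bullet> x)" using h(3) unfolding P1hom_def by blast
  have "affF F" by (rule affF_vec) (use h(2) N0_affF in auto)
  moreover have "linear (\<lambda>x. q x *\<^sub>R (mat 1 :: mat3))"
    unfolding q by (rule linearI) (simp_all add: inner_add_right scaleR_add_left)
  ultimately show ?thesis unfolding h(1) using affF_add affF_lin by blast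
qed

context
  fixes a :: "nat \<Rightarrow> real^3"
  assumes inj: "inj_on a {..<4}" and ind: "\<not> affine_dependent (a ` {..<4})"
begin

lemma bx: "bc a x (\<lambda>i. bary a i x)" using bary_bc[OF inj ind] .

lemma bary_add: "bary a i (x + y) = bary a i x + bary a i y - bary a i 0"
proof (rule bary_eq[OF inj ind])
  show "bc a (x + y) (\<lambda>i. bary a i x + bary a i y - bary a i 0)"
    using bx[of x] bx[of y] bx[of 0]
    by (simp add: bc_def sum.distrib sum_subtractf scaleR_add_left scaleR_diff_left)
qed

lemma bary_scale: "bary a i (c *\<^sub>R x) = c * bary a i x + (1 - c) * bary a i 0"
proof (rule bary_eq[OF inj ind])
  have x: "bc a x (\<lambda>i. bary a i x)" and z: "bc a 0 (\<lambda>i. bary a i 0)" using bx by auto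
  have s1: "(\<Sum>j<4. c * bary a j x + (1 - c) * bary a j 0) = c * (\<Sum>j<4. bary a j x) + (1 - c) * (\<Sum>j<4. bary a j 0)"
    by (simp add: sum.distrib sum_distrib_left)
  have s2: "(\<Sum>j<4. (c * bary a j x + (1 - c) * bary a j 0) *\<^sub>R a j)
     = c *\<^sub>R (\<Sum>j<4. bary a j x *\<^sub>R a j) + (1 - c) *\<^sub>R (\<Sum>j<4. bary a j 0 *\<^sub>R a j)"
    by (simp add: sum.distrib scaleR_sum_right scaleR_add_left)
  show "bc a (c *\<^sub>R x) (\<lambda>i. c * bary a i x + (1 - c) * bary a i 0)"
    using x z unfolding bc_def s1 s2 by simp
qed

lemma Llin: "linear (\<lambda>x. bary a i x - bary a i 0)"
  by (rule linearI) (simp_all add: bary_add bary_scale algebra_simps)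

lemma bary_deriv: "((\<lambda>x. bary a i x) has_derivative (\<lambda>h. bary a i h - bary a i 0)) (at y)"
proof -
  have "((\<lambda>x. (bary a i x - bary a i 0) + bary a i 0) has_derivative (\<lambda>h. bary a i h - bary a i 0)) (at y)"
    by (rule has_derivative_add_const, rule linear_imp_has_derivative, rule Llin)
  thus ?thesis by simp
qed

lemma bary_aff: "affF (\<lambda>x. bary a i x)"
  using affF_add[OF affF_const[of "bary a i 0"] affF_lin[OF Llin[of i]]] by simp

lemma bary_vert: "k < 4 \<Longrightarrow> bary a i (a k) = (if i = k then 1 else 0)"
proof -
  assume k: "k < 4"
  have e: "(\<lambda>j. (if j = k then 1 else 0) *\<^sub>R a j) = (\<lambda>j. if j = k then a j else 0)" by auto
  have "bc a (a k) (\<lambda>i. if i = k then 1 else 0)"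
    unfolding bc_def e using k by simp
  thus ?thesis by (rule bary_eq[OF inj ind])
qed

end

definition dQ :: "(pt \<Rightarrow> real) \<Rightarrow> bool" where
  "dQ p \<longleftrightarrow> (\<exists>D. (\<forall>x. (p has_derivative D x) (at x)) \<and> (\<forall>h. affF (\<lambda>x. D x h)))"

lemma dQ_span:
  fixes S :: "(pt \<Rightarrow> real) set"
  assumes "\<And>g. g \<in> S \<Longrightarrow> dQ g" "f \<in> fv.span S"
  shows "dQ f"
  using assms(2)
proof (induction rule: fv.span_induct)
  case base
  show ?case unfolding fv.subspace_def
  proof (intro conjI ballI allI)
    have "((\<lambda>x::pt. 0::real) has_derivative (\<lambda>h. 0)) (at x)" for x by simp
    thus "0 \<in> Collect dQ" unfolding dQ_def zero_fun_def
      by (intro CollectI exI[of _ "\<lambda>x h. 0"]) (simp add: affF_const)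
  next
    fix x y :: "pt \<Rightarrow> real" assume "x \<in> Collect dQ" "y \<in> Collect dQ"
    then obtain D E where D: "\<And>z. (x has_derivative D z) (at z)" "\<And>h. affF (\<lambda>z. D z h)"
      and E: "\<And>z. (y has_derivative E z) (at z)" "\<And>h. affF (\<lambda>z. E z h)"
      unfolding dQ_def by auto
    show "x + y \<in> Collect dQ" unfolding dQ_def plus_fun_def
      by (intro CollectI exI[of _ "\<lambda>z h. D z h + E z h"] conjI allI has_derivative_add D E affF_add)
  next
    fix c and x :: "pt \<Rightarrow> real" assume "x \<in> Collect dQ"
    then obtain D where D: "\<And>z. (x has_derivative D z) (at z)" "\<And>h. affF (\<lambda>z. D z h)"
      unfolding dQ_def by auto
    show "fscale c x \<in> Collect dQ" unfolding dQ_def fscale_def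
      using affF_scale[OF D(2), of c]
      by (intro CollectI exI[of _ "\<lambda>z h. c * D z h"] conjI allI)
         (auto intro!: has_derivative_mult_right D)
  qed
next
  case (step x)
  then show ?case using assms(1) by simp
qed

lemma trace_scale: "trace (c *\<^sub>R (A::mat3)) = c * trace A"
  by (simp add: trace_def sum_distrib_left)

lemma dev_lin: "linear dev"
proof (rule linearI)
  fix x y :: mat3
  show "dev (x + y) = dev x + dev y"
    by (simp add: dev_def trace_add add_divide_distrib scaleR_add_left)
next
  fix c and x :: mat3
  show "dev (c *\<^sub>R x) = c *\<^sub>R dev x"
    by (simp add: dev_def trace_scale scaleR_diff_right)
qed

context
  fixes a :: "nat \<Rightarrow> real^3"
  assumes inj: "inj_on a {..<4}" and ind: "\<not> affine_dependent (a ` {..<4})"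
begin

lemma affF_bm: "affF (\<lambda>x. bary a i x * k)"
  using affF_scale[OF bary_aff[OF inj ind, of i], of k] by (simp add: mult.commute)

lemma dQ_prod: "dQ (\<lambda>x. bary a i x * bary a j x)"
  unfolding dQ_def
proof (intro exI[of _ "\<lambda>x h. bary a i x * (bary a j h - bary a j 0) + (bary a i h - bary a i 0) * bary a j x"] conjI allI)
  fix x show "((\<lambda>x. bary a i x * bary a j x) has_derivative
     (\<lambda>h. bary a i x * (bary a j h - bary a j 0) + (bary a i h - bary a i 0) * bary a j x)) (at x)"
    by (rule has_derivative_mult[OF bary_deriv[OF inj ind] bary_deriv[OF inj ind]])
next
  fix h show "affF (\<lambda>x. bary a i x * (bary a j h - bary a j 0) + (bary a i h - bary a i 0) * bary a j x)"
    using affF_add[OF affF_bm[of i "bary a j h - bary a j 0"] affF_bm[of j "bary a i h - bary a i 0"]]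
    by (simp only: mult.commute[of "bary a i h - bary a i 0"])
qed

lemma Eedge_dQ: "p \<in> Eedge a \<Longrightarrow> dQ p"
  unfolding Eedge_def fspan_def
  by (rule dQ_span) (auto simp: dQ_prod)

lemma devDE_affF: "Y \<in> devDE a \<Longrightarrow> affF Y"
proof -
  assume "Y \<in> devDE a"
  then obtain v where v: "Y = (\<lambda>x. dev (Jac v x))" "\<forall>i. (\<lambda>x. v x $ i) \<in> Eedge a"
    unfolding devDE_def by blast
  have "\<forall>i. \<exists>D. (\<forall>x. ((\<lambda>y. v y $ i) has_derivative D x) (at x)) \<and> (\<forall>h. affF (\<lambda>x. D x h))"
    using v(2) Eedge_dQ unfolding dQ_def by blast
  then obtain D where D: "\<And>i x. ((\<lambda>y. v y $ i) has_derivative D i x) (at x)" "\<And>i h. affF (\<lambda>x. D i x h)"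
    by metis
  have J: "Jac v x = (\<chi> i j. D i x (axis j 1))" for x
    unfolding Jac_def using frechet_derivative_at[OF D(1)] by metis
  have "affF (Jac v)" unfolding J
    by (intro affF_vec) (simp add: D(2))
  thus ?thesis unfolding v(1) by (rule affF_comp[OF _ dev_lin])
qed

end

lemma N0_mem: "(\<lambda>p::pt. c + vector [w2*p$3 - w3*p$2, w3*p$1 - w1*p$3, w1*p$2 - w2*p$1]) \<in> N0"
proof -
  let ?S = "{(\<lambda>p. vector [1, 0, 0]), (\<lambda>p. vector [0, 1, 0]), (\<lambda>p. vector [0, 0, 1]),
              (\<lambda>p. vector [0, p$3, - (p$2)]), (\<lambda>p. vector [- (p$3), 0, p$1]),
              (\<lambda>p. vector [p$2, - (p$1), 0])} :: (pt \<Rightarrow> pt) set"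
  have eq: "(\<lambda>p::pt. c + vector [w2*p$3 - w3*p$2, w3*p$1 - w1*p$3, w1*p$2 - w2*p$1])
    = fscale (c$1) (\<lambda>p. vector [1, 0, 0]) + fscale (c$2) (\<lambda>p. vector [0, 1, 0]) + fscale (c$3) (\<lambda>p. vector [0, 0, 1])
      + fscale (-w1) (\<lambda>p. vector [0, p$3, - (p$2)]) + fscale (-w2) (\<lambda>p. vector [- (p$3), 0, p$1])
      + fscale (-w3) (\<lambda>p. vector [p$2, - (p$1), 0])"
    by (rule ext) (simp add: fscale_def vec_eq_iff forall_3 algebra_simps)
  show ?thesis unfolding N0_def fspan_def eq
    by (intro fv.span_add fv.span_scale fv.span_base) auto
qed

lemma N0_row: "(\<lambda>x::pt. C + (\<chi> j. g$j * x$k - (g \<bullet> x) * (if k = j then 1 else 0))) \<in> N0"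
proof -
  have k: "k = 1 \<or> k = 2 \<or> k = 3" by (rule exhaust_3)
  moreover
  { assume k1: "k = 1"
    have e: "(\<lambda>x::pt. C + (\<chi> j. g$j * x$k - (g \<bullet> x) * (if k = j then 1 else 0)))
      = (\<lambda>p::pt. C + vector [(-g$3)*p$3 - (g$2)*p$2, (g$2)*p$1 - 0*p$3, 0*p$2 - (-g$3)*p$1])"
      by (rule ext) (simp add: k1 vec_eq_iff forall_3 inner_vec_def sum_3 algebra_simps)
    have ?thesis by (simp only: e) (rule N0_mem) }
  moreover
  { assume k2: "k = 2"
    have e: "(\<lambda>x::pt. C + (\<chi> j. g$j * x$k - (g \<bullet> x) * (if k = j then 1 else 0)))
      = (\<lambda>p::pt. C + vector [0*p$3 - (-g$1)*p$2, (-g$1)*p$1 - (g$3)*p$3, (g$3)*p$2 - 0*p$1])"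
      by (rule ext) (simp add: k2 vec_eq_iff forall_3 inner_vec_def sum_3 algebra_simps)
    have ?thesis by (simp only: e) (rule N0_mem) }
  moreover
  { assume k3: "k = 3"
    have e: "(\<lambda>x::pt. C + (\<chi> j. g$j * x$k - (g \<bullet> x) * (if k = j then 1 else 0)))
      = (\<lambda>p::pt. C + vector [(g$1)*p$3 - 0*p$2, 0*p$1 - (-g$2)*p$3, (-g$2)*p$2 - (g$1)*p$1])"
      by (rule ext) (simp add: k3 vec_eq_iff forall_3 inner_vec_def sum_3 algebra_simps)
    have ?thesis by (simp only: e) (rule N0_mem) }
  ultimately show ?thesis by blast
qed

lemma lin_inner3:
  fixes L :: "pt \<Rightarrow> real"
  assumes "linear L"
  shows "L x = (\<chi> j. L (axis j 1)) \<bullet> x"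
proof -
  have "x = x$1 *\<^sub>R axis 1 1 + x$2 *\<^sub>R axis 2 1 + x$3 *\<^sub>R axis 3 1"
    by (simp add: vec_eq_iff forall_3 axis_def)
  hence "L x = L (x$1 *\<^sub>R axis 1 1 + x$2 *\<^sub>R axis 2 1 + x$3 *\<^sub>R axis 3 1)" by simp
  also have "\<dots> = x$1 * L (axis 1 1) + x$2 * L (axis 2 1) + x$3 * L (axis 3 1)"
    by (simp add: linear_add[OF assms] linear_scale[OF assms])
  finally show ?thesis by (simp add: inner_vec_def sum_3 mult.commute)
qed

lemma sum4: "(\<Sum>j<4::nat. f j) = f 0 + f 1 + f 2 + f 3"
proof -
  have "{..<4::nat} = {0,1,2,3}" by auto
  thus ?thesis by (simp add: add.assoc)
qed

context
  fixes a :: "nat \<Rightarrow> real^3"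
  assumes inj: "inj_on a {..<4}" and ind: "\<not> affine_dependent (a ` {..<4})"
begin

definition "gg = (\<chi> j. bary a 0 (axis j 1) - bary a 0 0)"
definition "v0 = (\<lambda>x. \<chi> k. bary a 0 x * (x$k - a 0 $ k))"

lemma L0_inner: "bary a 0 x - bary a 0 0 = gg \<bullet> x"
  using lin_inner3[OF Llin[OF inj ind, of 0], of x] unfolding gg_def by simp

lemma v0_deriv: "((\<lambda>y. v0 y $ k) has_derivative
   (\<lambda>h. bary a 0 x * (h$k) + (bary a 0 h - bary a 0 0) * (x$k - a 0 $ k))) (at x)"
proof -
  have d: "((\<lambda>y. y$k - a 0 $ k) has_derivative (\<lambda>h. h$k)) (at x)"
  proof -
    have "((\<lambda>y::pt. y$k) has_derivative (\<lambda>h. h$k)) (at x)"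
      by (rule bounded_linear_imp_has_derivative[OF bounded_linear_vec_nth])
    from has_derivative_diff[OF this has_derivative_const[of "a 0 $ k"]] show ?thesis by simp
  qed
  show ?thesis unfolding v0_def
    using has_derivative_mult[OF bary_deriv[OF inj ind, of 0] d] by (simp add: mult.commute)
qed

lemma Jac_v0: "Jac v0 x = (\<chi> k j. bary a 0 x * (if k = j then 1 else 0) + gg$j * (x$k - a 0 $ k))"
proof -
  have "Jac v0 x $ k $ j = bary a 0 x * (if k = j then 1 else 0) + gg$j * (x$k - a 0 $ k)" for k j
  proof -
    have "Jac v0 x $ k $ j = frechet_derivative (\<lambda>y. v0 y $ k) (at x) (axis j 1)"
      unfolding Jac_def by simp
    also have "\<dots> = bary a 0 x * (axis j 1 $ k) + (bary a 0 (axis j 1) - bary a 0 0) * (x$k - a 0 $ k)"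
      by (simp add: frechet_derivative_at[OF v0_deriv[of k x], symmetric])
    also have "\<dots> = bary a 0 x * (if k = j then 1 else 0) + gg$j * (x$k - a 0 $ k)"
      unfolding gg_def axis_def by simp
    finally show ?thesis .
  qed
  thus ?thesis by (simp add: vec_eq_iff)
qed

lemma tr_Jac: "trace (Jac v0 x) = 3 * bary a 0 x + gg \<bullet> x - gg \<bullet> a 0"
  unfolding Jac_v0 by (simp add: trace_def sum_3 inner_vec_def algebra_simps)

lemma devJ: "dev (Jac v0 x) $ k $ j = bary a 0 x * (if k = j then 1 else 0) + gg$j * (x$k - a 0 $ k)
   - (3 * bary a 0 x + gg \<bullet> x - gg \<bullet> a 0) / 3 * (if k = j then 1 else 0)"
  unfolding dev_def tr_Jac by (simp add: Jac_v0 mat_def)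

lemma devJ_Y0: "(\<lambda>x. dev (Jac v0 x)) \<in> Y0"
proof -
  define C where "C k = (\<chi> j. - gg$j * a 0 $ k + (gg \<bullet> a 0) / 3 * (if k = j then 1 else 0))" for k :: 3
  define F where "F x = (\<chi> k. C k + (\<chi> j. gg$j * x$k - (gg \<bullet> x) * (if k = j then 1 else 0)))" for x :: pt
  define q where "q x = ((2/3) *\<^sub>R gg) \<bullet> x" for x :: pt
  have eq: "dev (Jac v0 x) = F x + q x *\<^sub>R mat 1" for x
    by (auto simp: vec_eq_iff devJ F_def C_def q_def mat_def field_simps)
  have rows: "\<forall>i. (\<lambda>x. F x $ i) \<in> N0" unfolding F_def using N0_row by simp
  have "q \<in> P1hom" unfolding P1hom_def q_def by blast
  thus ?thesis unfolding Y0_def using rows eq by blast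
qed

lemma v0_E: "(\<lambda>x. v0 x $ k) \<in> Eedge a"
proof -
  have e: "(\<lambda>x. v0 x $ k) = (\<Sum>j\<in>{1,2,3}. fscale (a j $ k - a 0 $ k) (\<lambda>x. bary a 0 x * bary a j x))"
  proof (rule ext)
    fix x
    have b: "bc a x (\<lambda>i. bary a i x)" by (rule bx[OF inj ind])
    have s1: "bary a 0 x + bary a 1 x + bary a 2 x + bary a 3 x = 1"
      using b unfolding bc_def sum4 by simp
    have s2: "bary a 0 x * a 0 $ k + bary a 1 x * a 1 $ k + bary a 2 x * a 2 $ k + bary a 3 x * a 3 $ k = x $ k"
    proof -
      have "(\<Sum>j<4. bary a j x *\<^sub>R a j) = x" using b unfolding bc_def by simp
      hence "(\<Sum>j<4. bary a j x *\<^sub>R a j) $ k = x $ k" by simp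
      thus ?thesis unfolding sum_component sum4 by simp
    qed
    have "x $ k - a 0 $ k = bary a 1 x * (a 1 $ k - a 0 $ k) + bary a 2 x * (a 2 $ k - a 0 $ k) + bary a 3 x * (a 3 $ k - a 0 $ k)"
    proof -
      have "a 0 $ k = (bary a 0 x + bary a 1 x + bary a 2 x + bary a 3 x) * a 0 $ k" using s1 by simp
      thus ?thesis using s2 by (simp add: algebra_simps)
    qed
    note h = this
    have "v0 x $ k = bary a 0 x * (x $ k - a 0 $ k)" by (simp add: v0_def)
    also have "\<dots> = bary a 0 x * (bary a 1 x * (a 1 $ k - a 0 $ k) + bary a 2 x * (a 2 $ k - a 0 $ k) + bary a 3 x * (a 3 $ k - a 0 $ k))"
      by (simp only: h)
    also have "\<dots> = (\<Sum>j\<in>{1,2,3}. fscale (a j $ k - a 0 $ k) (\<lambda>x. bary a 0 x * bary a j x)) x"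
      unfolding fun_sum_apply by (simp add: fscale_def algebra_simps)
    finally show "v0 x $ k = (\<Sum>j\<in>{1,2,3}. fscale (a j $ k - a 0 $ k) (\<lambda>x. bary a 0 x * bary a j x)) x" .
  qed
  have m: "(\<lambda>x. bary a 0 x * bary a j x) \<in> {(\<lambda>x. bary a i x * bary a j x) | i j. i < j \<and> j < 4}"
    if "j \<in> {1,2,3}" for j :: nat
    using that by (intro CollectI exI[of _ "0::nat"] exI[of _ j] conjI refl) auto
  show ?thesis unfolding e Eedge_def fspan_def
    by (intro fv.span_sum fv.span_scale fv.span_base m)
qed

lemma devJ_nz: "dev (Jac v0 (a 1)) \<noteq> 0"
proof
  assume z: "dev (Jac v0 (a 1)) = 0"
  have b1: "bary a 0 (a 1) = 0" and b0: "bary a 0 (a 0) = 1" using bary_vert[OF inj ind] by auto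
  have t: "gg \<bullet> a 1 - gg \<bullet> a 0 = -1"
    using L0_inner[of "a 1"] L0_inner[of "a 0"] b1 b0 by simp
  have e11: "gg$1 * (a 1 $ 1 - a 0 $ 1) + 1/3 = 0"
    using z devJ[of "a 1" 1 1] b1 t by (simp add: field_simps)
  have e22: "gg$2 * (a 1 $ 2 - a 0 $ 2) + 1/3 = 0"
    using z devJ[of "a 1" 2 2] b1 t by (simp add: field_simps)
  have e12: "gg$2 * (a 1 $ 1 - a 0 $ 1) = 0"
    using z devJ[of "a 1" 1 2] b1 by simp
  show False using e11 e22 e12 by auto
qed

end

theorem mainTheorem2:
  fixes a :: "nat \<Rightarrow> real^3" and T :: "(real^3) set"
  assumes "inj_on a {..<4}"
    and "\<not> affine_dependent (a ` {..<4})"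
    and "T = convex hull (a ` {..<4})"
  shows "fdim (onT T ` Y0) + fdim (onT T ` devDE a)
           > fdim {Y + W | Y W. Y \<in> onT T ` Y0 \<and> W \<in> onT T ` devDE a}"
proof -
  let ?V = "\<lambda>x. dev (Jac (v0 a) x)"
  let ?z = "onT T ?V"
  have zA: "?z \<in> onT T ` Y0" using devJ_Y0[OF assms(1,2)] by blast
  have "?V \<in> devDE a" unfolding devDE_def using v0_E[OF assms(1,2)] by blast
  hence zB: "?z \<in> onT T ` devDE a" by blast
  have "a 1 \<in> T" unfolding assms(3) by (rule hull_inc) auto
  hence "?z (a 1) \<noteq> 0" using devJ_nz[OF assms(1,2)] by (simp add: onT_def)
  hence z0: "?z \<noteq> 0" by auto
  have A: "onT T ` Y0 \<subseteq> fv.span (GT T)" using span_affF Y0_affF by blast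
  have B: "onT T ` devDE a \<subseteq> fv.span (GT T)" using span_affF devDE_affF[OF assms(1,2)] by blast
  show ?thesis unfolding fdim_def
    using dim_sum_lt[OF A B finite_GT zA zB z0] by simp
qed

end
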